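(* In the iAPG setting described in the context, assume $\mu>0$, fix $c\in(0,1)$ and $\varepsilon_0>0$, and suppose $\varepsilon_k=\frac{\varepsilon_0}{k+1}\sqrt{\prod_{j=0}^{k-1}(1-c\alpha_j)}$ for all $k\ge1$. Let $\kappa=\frac{L_g}{\gamma_{\mathrm{dec}}\mu}$, $\psi_0=F(x^{(0)})-F^*+(1-(1-c)\alpha_0)\frac{\gamma_0}{2}\|x^*-z^{(0)}\|^2$, $S=\frac{\sqrt\kappa}{2(1-c)^2\underline L}\sum_{k=0}^\infty\frac{\varepsilon_0^2}{(k+1)^2}$, and $\delta_k=\sqrt{\prod_{j=0}^{k-1}(1-c\alpha_j)}\sqrt{\frac{2(\psi_0+S)}{\mu}}$ (empty product $=1$). For $y\in\mathbb R^n$, $\eta>0$ define $\Phi(x;y,\eta)=\langle\nabla g(y),x-y\rangle+\frac1{2\eta}\|x-y\|^2+h(x)+r(x)$ and $x_*^{(k+1)}=\arg\min_x\Phi(x;y^{(k)},\eta_k)$. Then $$\Phi(x^{(k)};y^{(k)},\eta_k)-\Phi(x_*^{(k+1)};y^{(k)},\eta_k)\le\begin{cases}\frac1{2\underline L}\,\mathrm{dist}\big(0,\partial F(x^{(0)})\big)^2,& k=0,\\[2pt] \frac1{2\underline L}\Big(\varepsilon_{k-1}+\frac{3L_g(\delta_k+\delta_{k-1})}{\gamma_{\mathrm{dec}}\sqrt c}\Big)^2,& k\ge1.\end{cases}$$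
   Context: iAPG setting. Let $g,h:\mathbb R^n\to\mathbb R$ and $r:\mathbb R^n\to\mathbb R\cup\{+\infty\}$, where $g$ is convex, $\mu$-strongly convex for some $\mu\ge0$, and differentiable with $L_g$-Lipschitz gradient ($L_g>0$); $h$ is convex and differentiable with $L_h$-Lipschitz gradient; $r$ is proper, closed and convex. Put $H=h+r$, $F=g+H$, and assume $F$ attains its minimum value $F^*$ at some point $x^*$. Fix constants $\gamma_{\mathrm{dec}}\in(0,1)$ and $\underline L>0$ with $\mu\le\underline L\le L_g$. We consider points $x^{(k)},z^{(k)},y^{(k)}\in\mathbb R^n$ and scalars $\eta_k>0,\alpha_k>0,\gamma_k>0,\varepsilon_k\ge0$ ($k\ge0$) such that $x^{(0)}=z^{(0)}\in\mathrm{dom}(H)$, $\gamma_0\ge\mu$, and for every $k\ge0$: (i) $\gamma_{\mathrm{dec}}/L_g<\eta_k\le1/\underline L$; (ii) $\gamma_{k+1}=\alpha_k^2/\eta_k=(1-\alpha_k)\gamma_k+\alpha_k\mu$; (iii) $y^{(k)}=\frac{1}{\alpha_k\gamma_k+\gamma_{k+1}}\big(\alpha_k\gamma_k z^{(k)}+\gamma_{k+1}x^{(k)}\big)$; (iv) $\mathrm{dist}\big(0,\ \nabla g(y^{(k)})+\tfrac1{\eta_k}(x^{(k+1)}-y^{(k)})+\partial H(x^{(k+1)})\big)\le\varepsilon_k$; (v) $g(x^{(k+1)})\le g(y^{(k)})+\langle\nabla g(y^{(k)}),x^{(k+1)}-y^{(k)}\rangle+\frac1{2\eta_k}\|x^{(k+1)}-y^{(k)}\|^2$;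 (vi) $z^{(k+1)}=x^{(k)}+\frac1{\alpha_k}(x^{(k+1)}-x^{(k)})$. Here $\partial$ denotes the convex subdifferential and $\mathrm{dist}(0,S)=\inf_{s\in S}\|s\|$. *)

theory Defs
  imports "HOL-Analysis.Analysis"
begin

text \<open>Extended-real-valued functions (value \<infinity> outside the effective domain).\<close>

definition eproper :: "('a \<Rightarrow> ereal) \<Rightarrow> bool" where
  "eproper f \<longleftrightarrow> (\<forall>x. f x \<noteq> -\<infinity>) \<and> (\<exists>x. f x \<noteq> \<infinity>)"

definition econvex :: "('a::real_vector \<Rightarrow> ereal) \<Rightarrow> bool" where
  "econvex f \<longleftrightarrow> (\<forall>x y t. 0 \<le> t \<longrightarrow> t \<le> 1 \<longrightarrow>
      f ((1 - t) *\<^sub>R x + t *\<^sub>R y) \<le> ereal (1 - t) * f x + ereal t * f y)"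

definition eclosed :: "('a::topological_space \<Rightarrow> ereal) \<Rightarrow> bool" where
  "eclosed f \<longleftrightarrow> closed {(x, t::real). f x \<le> ereal t}"

definition subdiff :: "('a::real_inner \<Rightarrow> ereal) \<Rightarrow> 'a \<Rightarrow> 'a set" where
  "subdiff f x = {s. f x \<noteq> \<infinity> \<and> (\<forall>y. f x + ereal (s \<bullet> (y - x)) \<le> f y)}"

text \<open>dist(0,S) = inf of norms, with inf of the empty set = +\<infinity>.\<close>
definition dist0 :: "'a::real_normed_vector set \<Rightarrow> ereal" where
  "dist0 S = Inf ((\<lambda>s. ereal (norm s)) ` S)"

definition Phi :: "('a::real_inner \<Rightarrow> 'a) \<Rightarrow> ('a \<Rightarrow> real) \<Rightarrow> ('a \<Rightarrow> ereal)
    \<Rightarrow> 'a \<Rightarrow> 'a \<Rightarrow> real \<Rightarrow> ereal" where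
  "Phi dg h r x y \<eta> = ereal (dg y \<bullet> (x - y) + norm (x - y)^2 / (2 * \<eta>) + h x) + r x"

end

theory Submission
  imports Defs
begin


lemma dir_tendsto:
  fixes g :: "'a::real_inner \<Rightarrow> real"
  assumes "(g has_derivative (\<lambda>d. a \<bullet> d)) (at y)"
  shows "((\<lambda>t. (g (y + t *\<^sub>R d) - g y) / t) \<longlongrightarrow> a \<bullet> d) (at_right 0)"
proof -
  have l: "((\<lambda>t::real. y + t *\<^sub>R d) has_derivative (\<lambda>t. t *\<^sub>R d)) (at 0)"
    by (auto intro!: derivative_eq_intros)
  have "((\<lambda>t. g (y + t *\<^sub>R d)) has_derivative (\<lambda>t. a \<bullet> (t *\<^sub>R d))) (at 0)"
    using has_derivative_compose[OF l, of g "\<lambda>d. a \<bullet> d"] assms by simp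
  hence "((\<lambda>t. g (y + t *\<^sub>R d)) has_derivative (\<lambda>t. t * (a \<bullet> d))) (at 0)" by simp
  moreover have "(\<lambda>t. t * (a \<bullet> d)) = (*) (a \<bullet> d)" by (rule ext) simp
  ultimately have "((\<lambda>t. g (y + t *\<^sub>R d)) has_real_derivative (a \<bullet> d)) (at 0)"
    by (simp add: has_field_derivative_def)
  hence "((\<lambda>t. (g (y + (0+t) *\<^sub>R d) - g (y + 0 *\<^sub>R d)) / t) \<longlongrightarrow> a \<bullet> d) (at 0)"
    unfolding DERIV_def by simp
  hence "((\<lambda>t. (g (y + t *\<^sub>R d) - g y) / t) \<longlongrightarrow> a \<bullet> d) (at 0)" by simp
  thus ?thesis by (rule filterlim_mono) (auto simp: at_within_le_at)
qed

lemma lim_le_right: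
  fixes f q :: "real \<Rightarrow> real"
  assumes "(f \<longlongrightarrow> A) (at_right 0)" "(q \<longlongrightarrow> B) (at_right 0)"
    "\<And>t. 0 < t \<Longrightarrow> t < 1 \<Longrightarrow> f t \<le> q t"
  shows "A \<le> B"
proof (rule tendsto_le[OF _ assms(2) assms(1)])
  show "at_right (0::real) \<noteq> bot" by simp
  show "\<forall>\<^sub>F x in at_right 0. f x \<le> q x"
    using eventually_at_right_real[of 0 1] by (rule eventually_mono) (auto intro: assms(3))
qed

lemma grad_ineq:
  fixes g :: "'a::real_inner \<Rightarrow> real"
  assumes "(g has_derivative (\<lambda>d. a \<bullet> d)) (at y)"
    and "\<And>t. 0 \<le> t \<Longrightarrow> t \<le> 1 \<Longrightarrow>
        g ((1 - t) *\<^sub>R y + t *\<^sub>R u) \<le> (1 - t) * g y + t * g u - m / 2 * t * (1 - t) * norm (y - u)^2"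
  shows "g u \<ge> g y + a \<bullet> (u - y) + m / 2 * norm (u - y)^2"
proof -
  have "a \<bullet> (u - y) \<le> g u - g y - m / 2 * (1 - 0) * norm (y - u)^2"
  proof (rule lim_le_right[OF dir_tendsto[OF assms(1)]])
    show "((\<lambda>t. g u - g y - m / 2 * (1 - t) * norm (y - u)^2) \<longlongrightarrow> g u - g y - m / 2 * (1 - 0) * norm (y - u)^2) (at_right 0)"
      by (intro tendsto_intros)
    fix t :: real assume t: "0 < t" "t < 1"
    have e: "y + t *\<^sub>R (u - y) = (1 - t) *\<^sub>R y + t *\<^sub>R u" by (simp add: algebra_simps)
    have "g (y + t *\<^sub>R (u - y)) \<le> (1 - t) * g y + t * g u - m / 2 * t * (1 - t) * norm (y - u)^2"
      using assms(2)[of t] t e by simp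
    hence "g (y + t *\<^sub>R (u - y)) - g y \<le> t * (g u - g y - m / 2 * (1 - t) * norm (y - u)^2)"
      by (simp add: algebra_simps)
    thus "(g (y + t *\<^sub>R (u - y)) - g y) / t \<le> g u - g y - m / 2 * (1 - t) * norm (y - u)^2"
      using t by (simp add: divide_le_eq mult.commute)
  qed
  thus ?thesis by (simp add: norm_minus_commute)
qed



lemma sq_conv:
  fixes p q :: "'a::real_inner"
  assumes "0 \<le> l" "l \<le> 1"
  shows "norm (l *\<^sub>R p + (1 - l) *\<^sub>R q)^2 \<le> l * norm p^2 + (1 - l) * norm q^2"
proof -
  have "norm (l *\<^sub>R p + (1 - l) *\<^sub>R q) \<le> l * norm p + (1 - l) * norm q"
    using norm_triangle_ineq[of "l *\<^sub>R p" "(1 - l) *\<^sub>R q"] assms by simp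
  hence "norm (l *\<^sub>R p + (1 - l) *\<^sub>R q)^2 \<le> (l * norm p + (1 - l) * norm q)^2"
    by (rule power_mono) simp
  also have "\<dots> \<le> l * norm p^2 + (1 - l) * norm q^2"
  proof -
    have "l * norm p^2 + (1 - l) * norm q^2 - (l * norm p + (1 - l) * norm q)^2
        = l * (1 - l) * (norm p - norm q)^2" by (simp add: power2_eq_square algebra_simps)
    also have "\<dots> \<ge> 0" using assms by simp
    finally show ?thesis by simp
  qed
  finally show ?thesis .
qed

lemma core:
  fixes a s xk xs xp y z zp :: "'a::real_inner"
  assumes Hs: "Hs \<ge> Hp + s \<bullet> (xs - xp)" and Hk: "Hk \<ge> Hp + s \<bullet> (xk - xp)"
    and gp: "gp \<le> gy + a \<bullet> (xp - y) + norm (xp - y)^2 / (2 * \<eta>)"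
    and gs: "gs \<ge> gy + a \<bullet> (xs - y) + \<mu> / 2 * norm (xs - y)^2"
    and gk: "gk \<ge> gy + a \<bullet> (xk - y)"
    and eta: "\<eta> > 0" and al: "0 < \<alpha>" "\<alpha> \<le> 1" and ga: "\<gamma> > 0" and mu: "\<mu> \<ge> 0"
    and G1: "G = \<alpha>^2 / \<eta>" and G2: "G = (1 - \<alpha>) * \<gamma> + \<alpha> * \<mu>"
    and y: "y = (1 / (\<alpha> * \<gamma> + G)) *\<^sub>R ((\<alpha> * \<gamma>) *\<^sub>R z + G *\<^sub>R xk)"
    and zp: "zp = xk + (1 / \<alpha>) *\<^sub>R (xp - xk)"
  shows "(gp + Hp) - (gs + Hs) + G / 2 * norm (xs - zp)^2
     \<le> (1 - \<alpha>) * ((gk + Hk) - (gs + Hs) + \<gamma> / 2 * norm (xs - z)^2)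
        + \<alpha> * ((a + (1 / \<eta>) *\<^sub>R (xp - y) + s) \<bullet> (zp - xs))"
proof -
  define u where "u = (1 - \<alpha>) *\<^sub>R xk + \<alpha> *\<^sub>R xs"
  define w where "w = a + (1 / \<eta>) *\<^sub>R (xp - y) + s"
  have Gpos: "G > 0" using G1 eta al by simp
  have xp: "xp = (1 - \<alpha>) *\<^sub>R xk + \<alpha> *\<^sub>R zp"
  proof -
    have "\<alpha> *\<^sub>R zp = \<alpha> *\<^sub>R xk + (xp - xk)" using zp al by (simp add: scaleR_add_right)
    thus ?thesis by (simp add: algebra_simps)
  qed
  have uxp: "u - xp = \<alpha> *\<^sub>R (xs - zp)" unfolding u_def xp by (simp add: algebra_simps)
  define v where "v = (1 / G) *\<^sub>R (((1 - \<alpha>) * \<gamma>) *\<^sub>R z + (\<alpha> * \<mu>) *\<^sub>R y)"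
  have AG: "\<alpha> * \<gamma> + G > 0" using al ga Gpos by (simp add: add_pos_pos)
  have yA: "(\<alpha> * \<gamma> + G) *\<^sub>R y = (\<alpha> * \<gamma>) *\<^sub>R z + G *\<^sub>R xk"
    using y AG by simp
  have Gv: "G *\<^sub>R v = ((1 - \<alpha>) * \<gamma>) *\<^sub>R z + (\<alpha> * \<mu>) *\<^sub>R y"
    unfolding v_def using Gpos by simp
  have "G *\<^sub>R ((1 - \<alpha>) *\<^sub>R xk + \<alpha> *\<^sub>R v) = G *\<^sub>R y"
  proof -
    have "G *\<^sub>R ((1 - \<alpha>) *\<^sub>R xk + \<alpha> *\<^sub>R v) = ((1 - \<alpha>) * G) *\<^sub>R xk + \<alpha> *\<^sub>R (G *\<^sub>R v)"
      by (simp add: algebra_simps)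
    also have "\<dots> = ((1 - \<alpha>) * G) *\<^sub>R xk + (\<alpha> * (1 - \<alpha>) * \<gamma>) *\<^sub>R z + (\<alpha> * \<alpha> * \<mu>) *\<^sub>R y"
      unfolding Gv by (simp add: algebra_simps)
    also have "\<dots> = (1 - \<alpha>) *\<^sub>R ((\<alpha> * \<gamma>) *\<^sub>R z + G *\<^sub>R xk) + (\<alpha> * \<alpha> * \<mu>) *\<^sub>R y"
      by (simp add: algebra_simps)
    also have "\<dots> = (1 - \<alpha>) *\<^sub>R ((\<alpha> * \<gamma> + G) *\<^sub>R y) + (\<alpha> * \<alpha> * \<mu>) *\<^sub>R y"
      unfolding yA ..
    also have "\<dots> = ((1 - \<alpha>) * (\<alpha> * \<gamma> + G) + \<alpha> * \<alpha> * \<mu>) *\<^sub>R y"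
      by (simp add: algebra_simps)
    also have "(1 - \<alpha>) * (\<alpha> * \<gamma> + G) + \<alpha> * \<alpha> * \<mu> = G"
      using G2 by (simp add: algebra_simps)
    finally show ?thesis .
  qed
  hence yv: "y = (1 - \<alpha>) *\<^sub>R xk + \<alpha> *\<^sub>R v" using Gpos by simp
  have uy: "u - y = \<alpha> *\<^sub>R (xs - v)" unfolding u_def yv by (simp add: algebra_simps)
  define l where "l = (1 - \<alpha>) * \<gamma> / G"
  have l01: "0 \<le> l" "l \<le> 1" using al ga mu Gpos G2 unfolding l_def
    by (auto simp: divide_le_eq)
  have "xs - v = l *\<^sub>R (xs - z) + (1 - l) *\<^sub>R (xs - y)"
  proof -
    have l1: "1 - l = \<alpha> * \<mu> / G" unfolding l_def using Gpos G2 by (simp add: field_simps)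
    have "v = l *\<^sub>R z + (1 - l) *\<^sub>R y" unfolding l1 unfolding v_def l_def
      by (simp add: scaleR_add_right)
    moreover have "l *\<^sub>R (xs - z) + (1 - l) *\<^sub>R (xs - y) = xs - (l *\<^sub>R z + (1 - l) *\<^sub>R y)"
      by (simp add: algebra_simps)
    ultimately show ?thesis by simp
  qed
  hence "norm (xs - v)^2 \<le> l * norm (xs - z)^2 + (1 - l) * norm (xs - y)^2"
    using sq_conv[OF l01] by simp
  hence conv: "G * norm (xs - v)^2 \<le> (1 - \<alpha>) * \<gamma> * norm (xs - z)^2 + \<alpha> * \<mu> * norm (xs - y)^2"
  proof -
    assume h: "norm (xs - v)^2 \<le> l * norm (xs - z)^2 + (1 - l) * norm (xs - y)^2"
    have "G * norm (xs - v)^2 \<le> G * (l * norm (xs - z)^2 + (1 - l) * norm (xs - y)^2)"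
      using h Gpos by simp
    also have Gl: "G * l = (1 - \<alpha>) * \<gamma>" unfolding l_def using Gpos by simp
    have "G * (1 - l) = G - G * l" by (simp add: algebra_simps)
    hence Gl2: "G * (1 - l) = \<alpha> * \<mu>" using Gl G2 by linarith
    have "G * (l * norm (xs - z)^2 + (1 - l) * norm (xs - y)^2)
        = (G * l) * norm (xs - z)^2 + (G * (1 - l)) * norm (xs - y)^2" by (simp add: algebra_simps)
    hence "G * (l * norm (xs - z)^2 + (1 - l) * norm (xs - y)^2)
        = (1 - \<alpha>) * \<gamma> * norm (xs - z)^2 + \<alpha> * \<mu> * norm (xs - y)^2"
      unfolding Gl Gl2 .
    finally show ?thesis .
  qed
  have Hc: "Hp \<le> (1 - \<alpha>) * Hk + \<alpha> * Hs - s \<bullet> (u - xp)"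
  proof -
    have "s \<bullet> (u - xp) = (1 - \<alpha>) * (s \<bullet> (xk - xp)) + \<alpha> * (s \<bullet> (xs - xp))"
      unfolding u_def by (simp add: algebra_simps inner_diff_right)
    thus ?thesis using mult_left_mono[OF Hk, of "1 - \<alpha>"] mult_left_mono[OF Hs, of \<alpha>] al
      by (simp add: algebra_simps)
  qed
  have gc: "(1 - \<alpha>) * gk + \<alpha> * gs \<ge> gy + a \<bullet> (u - y) + \<alpha> * \<mu> / 2 * norm (xs - y)^2"
  proof -
    have "a \<bullet> (u - y) = (1 - \<alpha>) * (a \<bullet> (xk - y)) + \<alpha> * (a \<bullet> (xs - y))"
      unfolding u_def by (simp add: algebra_simps inner_diff_right)
    thus ?thesis using mult_left_mono[OF gk, of "1 - \<alpha>"] mult_left_mono[OF gs, of \<alpha>] al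
      by (simp add: algebra_simps)
  qed
  have wdef: "w \<bullet> (xp - u) = a \<bullet> (xp - u) + s \<bullet> (xp - u) + (1 / \<eta>) * ((xp - y) \<bullet> (xp - u))"
    unfolding w_def by (simp add: algebra_simps)
  have ident: "norm (xp - y)^2 - 2 * ((xp - y) \<bullet> (xp - u)) = norm (u - y)^2 - norm (u - xp)^2"
  proof -
    have "(u - xp) \<bullet> (xp - y) = (norm (u - y)^2 - norm (u - xp)^2 - norm (xp - y)^2) / 2"
      using dot_norm[of "u - xp" "xp - y"] by simp
    moreover have "(u - xp) \<bullet> (xp - y) = - ((xp - y) \<bullet> (xp - u))"
      by (simp add: inner_commute inner_diff_right inner_diff_left)
    ultimately show ?thesis by simp
  qed
  have main: "gp + Hp \<le> (1 - \<alpha>) * (gk + Hk) + \<alpha> * (gs + Hs) - \<alpha> * \<mu> / 2 * norm (xs - y)^2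
        + w \<bullet> (xp - u) + (norm (u - y)^2 - norm (u - xp)^2) / (2 * \<eta>)"
  proof -
    have e1: "a \<bullet> (xp - y) = a \<bullet> (xp - u) + a \<bullet> (u - y)" by (simp add: inner_diff_right)
    have e2: "(norm (u - y)^2 - norm (u - xp)^2) / (2 * \<eta>)
        = norm (xp - y)^2 / (2 * \<eta>) - (1 / \<eta>) * ((xp - y) \<bullet> (xp - u))"
      unfolding ident[symmetric] using eta by (simp add: field_simps)
    have e3: "s \<bullet> (xp - u) = - (s \<bullet> (u - xp))" by (simp add: inner_diff_right)
    have e4: "(1 - \<alpha>) * (gk + Hk) = (1 - \<alpha>) * gk + (1 - \<alpha>) * Hk"
      "\<alpha> * (gs + Hs) = \<alpha> * gs + \<alpha> * Hs" by (simp_all add: algebra_simps)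
    show ?thesis using gp gc Hc e1 e2 e3 e4 wdef by linarith
  qed
  have n1: "norm (u - xp)^2 / (2 * \<eta>) = G / 2 * norm (xs - zp)^2"
    unfolding uxp G1 using al by (simp add: power_mult_distrib abs_of_pos)
  have n2: "norm (u - y)^2 / (2 * \<eta>) = G / 2 * norm (xs - v)^2"
    unfolding uy G1 using al by (simp add: power_mult_distrib abs_of_pos)
  have n3: "w \<bullet> (xp - u) = \<alpha> * (w \<bullet> (zp - xs))"
  proof -
    have "xp - u = \<alpha> *\<^sub>R (zp - xs)" using uxp by (simp add: algebra_simps)
    thus ?thesis by simp
  qed
  have "(norm (u - y)^2 - norm (u - xp)^2) / (2 * \<eta>)
       = norm (u - y)^2 / (2 * \<eta>) - norm (u - xp)^2 / (2 * \<eta>)" by (simp add: diff_divide_distrib)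
  hence "gp + Hp \<le> (1 - \<alpha>) * (gk + Hk) + \<alpha> * (gs + Hs) - \<alpha> * \<mu> / 2 * norm (xs - y)^2
        + \<alpha> * (w \<bullet> (zp - xs)) + G / 2 * norm (xs - v)^2 - G / 2 * norm (xs - zp)^2"
    using main n1 n2 n3 by linarith
  moreover have "G / 2 * norm (xs - v)^2 = (G * norm (xs - v)^2) / 2" by simp
  moreover have "(1 - \<alpha>) * ((gk + Hk) - (gs + Hs) + \<gamma> / 2 * norm (xs - z)^2)
      = (1 - \<alpha>) * (gk + Hk) + \<alpha> * (gs + Hs) - (gs + Hs) + ((1 - \<alpha>) * \<gamma> * norm (xs - z)^2) / 2"
    by (simp add: algebra_simps)
  moreover have "\<alpha> * \<mu> / 2 * norm (xs - y)^2 = (\<alpha> * \<mu> * norm (xs - y)^2) / 2" by simp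
  ultimately show ?thesis using conv unfolding w_def[symmetric] by linarith
qed



lemma gap_real:
  fixes a p x y v :: "'a::real_inner"
  assumes eta: "\<eta> > 0" and sub: "Hx + s \<bullet> (v - x) \<le> Hv"
    and p: "p = a + (1 / \<eta>) *\<^sub>R (x - y) + s"
  shows "(a \<bullet> (x - y) + norm (x - y)^2 / (2 * \<eta>) + Hx)
       - (a \<bullet> (v - y) + norm (v - y)^2 / (2 * \<eta>) + Hv) \<le> \<eta> / 2 * norm p^2"
proof -
  define d where "d = v - x"
  have vy: "v - y = d + (x - y)" unfolding d_def by simp
  have n1: "norm (v - y)^2 = norm d^2 + 2 * (d \<bullet> (x - y)) + norm (x - y)^2"
    unfolding vy by (simp add: power2_norm_eq_inner inner_simps inner_commute)
  have av: "a \<bullet> (v - y) = a \<bullet> d + a \<bullet> (x - y)" unfolding vy by (simp add: inner_simps)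
  have pd: "p \<bullet> d = a \<bullet> d + (1 / \<eta>) * (d \<bullet> (x - y)) + s \<bullet> d"
    unfolding p by (simp add: inner_simps inner_commute)
  have sq: "0 \<le> norm (\<eta> *\<^sub>R p + d)^2" by simp
  have sq2: "norm (\<eta> *\<^sub>R p + d)^2 = \<eta>^2 * norm p^2 + 2 * \<eta> * (p \<bullet> d) + norm d^2"
    by (simp only: power2_norm_eq_inner) (simp add: inner_simps inner_commute power2_eq_square)
  have "0 \<le> (\<eta>^2 * norm p^2 + 2 * \<eta> * (p \<bullet> d) + norm d^2) / (2 * \<eta>)"
    using sq sq2 eta by simp
  also have "\<dots> = \<eta> / 2 * norm p^2 + p \<bullet> d + norm d^2 / (2 * \<eta>)"
    using eta by (simp add: field_simps power2_eq_square)
  finally have key: "0 \<le> \<eta> / 2 * norm p^2 + p \<bullet> d + norm d^2 / (2 * \<eta>)" .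
  have e2: "norm (v - y)^2 / (2 * \<eta>) = norm d^2 / (2 * \<eta>) + (1 / \<eta>) * (d \<bullet> (x - y)) + norm (x - y)^2 / (2 * \<eta>)"
    unfolding n1 using eta by (simp add: field_simps)
  show ?thesis using key e2 av pd sub unfolding d_def[symmetric] by linarith
qed

lemma gap_bound:
  fixes h :: "'a::real_inner \<Rightarrow> real" and r :: "'a \<Rightarrow> ereal"
  assumes s: "s \<in> subdiff (\<lambda>v. ereal (h v) + r v) x" and eta: "\<eta> > 0"
    and rp: "\<And>v. r v \<noteq> -\<infinity>"
  shows "Phi dg h r x y \<eta> - Phi dg h r v y \<eta>
      \<le> ereal (\<eta> / 2 * norm (dg y + (1 / \<eta>) *\<^sub>R (x - y) + s)^2)"
proof -
  from s have Hx: "ereal (h x) + r x \<noteq> \<infinity>"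
    and sg: "\<And>u. ereal (h x) + r x + ereal (s \<bullet> (u - x)) \<le> ereal (h u) + r u"
    unfolding subdiff_def by auto
  obtain rx where rx: "r x = ereal rx" using Hx rp[of x] by (cases "r x") auto
  show ?thesis
  proof (cases "r v = \<infinity>")
    case True
    thus ?thesis by (simp add: Phi_def rx)
  next
    case False
    then obtain rv where rv: "r v = ereal rv" using rp[of v] by (cases "r v") auto
    have "h x + rx + s \<bullet> (v - x) \<le> h v + rv" using sg[of v] by (simp add: rx rv)
    from gap_real[OF eta this refl, of "dg y" y]
    show ?thesis by (simp add: Phi_def rx rv)
  qed
qed

lemma dist0_approx:
  assumes "dist0 S \<le> ereal e" "t > 0"
  shows "\<exists>s\<in>S. norm s < e + t"
proof -
  have "Inf ((\<lambda>s. ereal (norm s)) ` S) < ereal (e + t)"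
  proof -
    have "ereal e < ereal (e + t)" using assms(2) by simp
    thus ?thesis using assms(1) unfolding dist0_def by (rule order.strict_trans1[rotated])
  qed
  then obtain s where "s \<in> S" "ereal (norm s) < ereal (e + t)" by (auto simp: Inf_less_iff)
  thus ?thesis by auto
qed

lemma eps_trick:
  fixes X Y Z :: real
  assumes "\<And>t. 0 < t \<Longrightarrow> t \<le> 1 \<Longrightarrow> X \<le> Y + t * Z" "Z \<ge> 0"
  shows "X \<le> Y"
proof (rule ccontr)
  assume "\<not> X \<le> Y"
  define t where "t = min 1 ((X - Y) / (2 * (Z + 1)))"
  have t: "0 < t" "t \<le> 1" using \<open>\<not> X \<le> Y\<close> assms(2) unfolding t_def by auto
  have "t * Z \<le> (X - Y) / (2 * (Z + 1)) * Z"
    using assms(2) unfolding t_def by (intro mult_right_mono) auto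
  also have "\<dots> < X - Y"
  proof -
    have "(X - Y) / (2 * (Z + 1)) * Z = (X - Y) * (Z / (2 * (Z + 1)))" by simp
    also have "\<dots> < (X - Y) * 1"
      using \<open>\<not> X \<le> Y\<close> assms(2) by (intro mult_strict_left_mono) (auto simp: divide_less_eq)
    finally show ?thesis by simp
  qed
  finally show False using assms(1)[OF t] by linarith
qed

lemma dist0_bound:
  fixes S :: "'a::real_normed_vector set"
  assumes "\<And>s. s \<in> S \<Longrightarrow> G \<le> ereal (norm s ^ 2 / (2 * L))" "L > 0"
  shows "G \<le> dist0 S ^ 2 / ereal (2 * L)"
proof (cases "S = {}")
  case True
  hence "dist0 S = \<infinity>" by (simp add: dist0_def top_ereal_def)
  moreover have "(\<infinity>::ereal) ^ 2 / ereal (2 * L) = \<infinity>" using assms(2) by (simp add: power2_eq_square)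
  ultimately show ?thesis by simp
next
  case False
  then obtain s0 where s0: "s0 \<in> S" by auto
  have nn: "0 \<le> dist0 S" unfolding dist0_def by (auto intro: Inf_greatest)
  have "dist0 S \<le> ereal (norm s0)" unfolding dist0_def using s0 by (auto intro: Inf_lower)
  then obtain d where d: "dist0 S = ereal d" "d \<ge> 0" using nn by (cases "dist0 S") auto
  show ?thesis
  proof (cases "G \<le> 0")
    case True
    have "0 \<le> dist0 S ^ 2 / ereal (2 * L)" using d assms(2) by simp
    thus ?thesis using True by simp
  next
    case False
    have "G \<le> ereal (norm s0 ^ 2 / (2 * L))" using assms(1)[OF s0] .
    then obtain gg where gg: "G = ereal gg" "gg > 0" using False by (cases G) auto
    have "ereal (sqrt (2 * L * gg)) \<le> dist0 S"
      unfolding dist0_def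
    proof (rule Inf_greatest, clarify)
      fix s assume "s \<in> S"
      hence "gg \<le> norm s ^ 2 / (2 * L)" using assms(1) gg by simp
      hence "2 * L * gg \<le> norm s ^ 2" using assms(2) by (simp add: field_simps)
      hence "sqrt (2 * L * gg) \<le> sqrt (norm s ^ 2)" by (rule real_sqrt_le_mono)
      thus "ereal (sqrt (2 * L * gg)) \<le> ereal (norm s)" by simp
    qed
    hence "sqrt (2 * L * gg) \<le> d" using d by simp
    hence "(sqrt (2 * L * gg))^2 \<le> d^2" using gg assms(2) by (intro power_mono) auto
    hence "2 * L * gg \<le> d^2" using gg assms(2) by simp
    hence "gg \<le> d^2 / (2 * L)" using assms(2) by (simp add: field_simps)
    thus ?thesis using gg d assms(2) by (simp add: power2_eq_square)
  qed
qed



lemma econv_real: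
  fixes r :: "'a::real_vector \<Rightarrow> ereal"
  assumes "econvex r" "\<And>v. r v \<noteq> -\<infinity>" "r u = ereal ru" "r v = ereal rv" "0 \<le> t" "t \<le> 1"
  shows "\<exists>rw. r ((1 - t) *\<^sub>R u + t *\<^sub>R v) = ereal rw \<and> rw \<le> (1 - t) * ru + t * rv"
proof -
  have "r ((1 - t) *\<^sub>R u + t *\<^sub>R v) \<le> ereal (1 - t) * r u + ereal t * r v"
    using assms(1,5,6) unfolding econvex_def by blast
  hence le: "r ((1 - t) *\<^sub>R u + t *\<^sub>R v) \<le> ereal ((1 - t) * ru + t * rv)" using assms(3,4) by simp
  then obtain rw where "r ((1 - t) *\<^sub>R u + t *\<^sub>R v) = ereal rw"
    using assms(2)[of "(1 - t) *\<^sub>R u + t *\<^sub>R v"] by (cases "r ((1 - t) *\<^sub>R u + t *\<^sub>R v)") auto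
  thus ?thesis using le by auto
qed

lemma sumrule:
  fixes g h :: "'a::real_inner \<Rightarrow> real" and r :: "'a \<Rightarrow> ereal"
  assumes g_grad: "(g has_derivative (\<lambda>d. a \<bullet> d)) (at x)" and hc: "convex_on UNIV h"
    and rc: "econvex r" and rp: "\<And>v. r v \<noteq> -\<infinity>"
    and s: "s \<in> subdiff (\<lambda>v. ereal (g v + h v) + r v) x"
  shows "s - a \<in> subdiff (\<lambda>v. ereal (h v) + r v) x"
proof -
  from s have Fx: "ereal (g x + h x) + r x \<noteq> \<infinity>"
    and sg: "\<And>u. ereal (g x + h x) + r x + ereal (s \<bullet> (u - x)) \<le> ereal (g u + h u) + r u"
    unfolding subdiff_def by auto
  obtain rx where rx: "r x = ereal rx" using Fx rp[of x] by (cases "r x") auto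
  have "ereal (h x) + r x + ereal ((s - a) \<bullet> (u - x)) \<le> ereal (h u) + r u" for u
  proof (cases "r u = \<infinity>")
    case True thus ?thesis by (simp add: rx)
  next
    case False
    then obtain ru where ru: "r u = ereal ru" using rp[of u] by (cases "r u") auto
    have "s \<bullet> (u - x) - (h u + ru - h x - rx) \<le> a \<bullet> (u - x)"
    proof (rule lim_le_right[OF _ dir_tendsto[OF g_grad]])
      show "((\<lambda>t. s \<bullet> (u - x) - (h u + ru - h x - rx)) \<longlongrightarrow> s \<bullet> (u - x) - (h u + ru - h x - rx)) (at_right 0)"
        by simp
      fix t :: real assume t: "0 < t" "t < 1"
      have wx: "x + t *\<^sub>R (u - x) = (1 - t) *\<^sub>R x + t *\<^sub>R u" by (simp add: algebra_simps)
      obtain rw where rw: "r ((1 - t) *\<^sub>R x + t *\<^sub>R u) = ereal rw" "rw \<le> (1 - t) * rx + t * ru"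
        using econv_real[OF rc rp rx ru, of t] t by auto
      have hw: "h ((1 - t) *\<^sub>R x + t *\<^sub>R u) \<le> (1 - t) * h x + t * h u"
        using convex_onD[OF hc, of t x u] t by simp
      have "g x + h x + rx + s \<bullet> ((1 - t) *\<^sub>R x + t *\<^sub>R u - x)
          \<le> g ((1 - t) *\<^sub>R x + t *\<^sub>R u) + h ((1 - t) *\<^sub>R x + t *\<^sub>R u) + rw"
        using sg[of "(1 - t) *\<^sub>R x + t *\<^sub>R u"] by (simp add: rx rw)
      moreover have "s \<bullet> ((1 - t) *\<^sub>R x + t *\<^sub>R u - x) = t * (s \<bullet> (u - x))"
        by (simp add: algebra_simps inner_diff_right)
      ultimately have "t * (s \<bullet> (u - x) - (h u + ru - h x - rx)) \<le> g (x + t *\<^sub>R (u - x)) - g x"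
        using hw rw(2) unfolding wx by (simp add: algebra_simps)
      thus "s \<bullet> (u - x) - (h u + ru - h x - rx) \<le> (g (x + t *\<^sub>R (u - x)) - g x) / t"
        using t by (simp add: le_divide_eq mult.commute)
    qed
    hence "h x + rx + (s - a) \<bullet> (u - x) \<le> h u + ru" by (simp add: inner_diff_left)
    thus ?thesis by (simp add: rx ru)
  qed
  thus ?thesis unfolding subdiff_def using rx by auto
qed

lemma strong_min:
  fixes g h :: "'a::real_inner \<Rightarrow> real" and r :: "'a \<Rightarrow> ereal"
  assumes gs: "\<And>u v t. 0 \<le> t \<Longrightarrow> t \<le> 1 \<Longrightarrow>
        g ((1 - t) *\<^sub>R u + t *\<^sub>R v) \<le> (1 - t) * g u + t * g v - \<mu> / 2 * t * (1 - t) * norm (u - v)^2"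
    and hc: "convex_on UNIV h" and rc: "econvex r" and rp: "\<And>v. r v \<noteq> -\<infinity>"
    and rs: "r xs = ereal rs" and rv: "r v = ereal rv"
    and Fmin: "\<And>w. ereal (g xs + h xs) + r xs \<le> ereal (g w + h w) + r w"
    and t: "0 < t" "t \<le> 1"
  shows "\<mu> / 2 * (1 - t) * norm (xs - v)^2 \<le> (g v + h v + rv) - (g xs + h xs + rs)"
proof -
  obtain rw where rw: "r ((1 - t) *\<^sub>R xs + t *\<^sub>R v) = ereal rw" "rw \<le> (1 - t) * rs + t * rv"
    using econv_real[OF rc rp rs rv, of t] t by auto
  have hw: "h ((1 - t) *\<^sub>R xs + t *\<^sub>R v) \<le> (1 - t) * h xs + t * h v"
    using convex_onD[OF hc, of t xs v] t by simp
  have gw: "g ((1 - t) *\<^sub>R xs + t *\<^sub>R v) \<le> (1 - t) * g xs + t * g v - \<mu> / 2 * t * (1 - t) * norm (xs - v)^2"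
    using gs[of t xs v] t by simp
  have "g xs + h xs + rs \<le> g ((1 - t) *\<^sub>R xs + t *\<^sub>R v) + h ((1 - t) *\<^sub>R xs + t *\<^sub>R v) + rw"
    using Fmin[of "(1 - t) *\<^sub>R xs + t *\<^sub>R v"] by (simp add: rs rw)
  hence "t * (\<mu> / 2 * (1 - t) * norm (xs - v)^2) \<le> t * ((g v + h v + rv) - (g xs + h xs + rs))"
    using hw gw rw(2) by (simp add: algebra_simps)
  thus ?thesis using t by simp
qed


theorem lemma4p2:
  fixes g h :: "'a::euclidean_space \<Rightarrow> real"
    and dg dh :: "'a \<Rightarrow> 'a"
    and r :: "'a \<Rightarrow> ereal"
    and \<mu> Lg Lh \<gamma>dec Lu c Fstar :: real
    and xstar :: 'a
    and x z y :: "nat \<Rightarrow> 'a"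
    and \<eta> \<alpha> \<gamma> eps :: "nat \<Rightarrow> real"
  defines "H \<equiv> (\<lambda>v. ereal (h v) + r v)"
    and "F \<equiv> (\<lambda>v. ereal (g v + h v) + r v)"
  assumes g_grad: "\<And>v. (g has_derivative (\<lambda>d. dg v \<bullet> d)) (at v)"
    and g_convex: "convex_on UNIV g"
    and \<mu>_nonneg: "\<mu> \<ge> 0"
    and g_strong: "\<And>u v t. 0 \<le> t \<Longrightarrow> t \<le> 1 \<Longrightarrow>
        g ((1 - t) *\<^sub>R u + t *\<^sub>R v) \<le> (1 - t) * g u + t * g v - \<mu> / 2 * t * (1 - t) * norm (u - v)^2"
    and Lg_pos: "Lg > 0"
    and g_lip: "\<And>u v. norm (dg u - dg v) \<le> Lg * norm (u - v)"
    and h_grad: "\<And>v. (h has_derivative (\<lambda>d. dh v \<bullet> d)) (at v)"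
    and h_convex: "convex_on UNIV h"
    and h_lip: "\<And>u v. norm (dh u - dh v) \<le> Lh * norm (u - v)"
    and r_proper: "eproper r" and r_closed: "eclosed r" and r_convex: "econvex r"
    and F_min: "\<And>v. F xstar \<le> F v" and Fstar_def: "F xstar = ereal Fstar"
    and \<gamma>dec: "0 < \<gamma>dec" "\<gamma>dec < 1"
    and Lu: "Lu > 0" "\<mu> \<le> Lu" "Lu \<le> Lg"
    and pos: "\<And>k. \<eta> k > 0" "\<And>k. \<alpha> k > 0" "\<And>k. \<gamma> k > 0" "\<And>k. eps k \<ge> 0"
    and init: "x 0 = z 0" "H (x 0) \<noteq> \<infinity>" "\<gamma> 0 \<ge> \<mu>"
    and step_i: "\<And>k. \<gamma>dec / Lg < \<eta> k \<and> \<eta> k \<le> 1 / Lu"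
    and step_ii: "\<And>k. \<gamma> (Suc k) = \<alpha> k ^ 2 / \<eta> k \<and> \<alpha> k ^ 2 / \<eta> k = (1 - \<alpha> k) * \<gamma> k + \<alpha> k * \<mu>"
    and step_iii: "\<And>k. y k = (1 / (\<alpha> k * \<gamma> k + \<gamma> (Suc k))) *\<^sub>R
                           ((\<alpha> k * \<gamma> k) *\<^sub>R z k + \<gamma> (Suc k) *\<^sub>R x k)"
    and step_iv: "\<And>k. dist0 {dg (y k) + (1 / \<eta> k) *\<^sub>R (x (Suc k) - y k) + s | s. s \<in> subdiff H (x (Suc k))}
                     \<le> ereal (eps k)"
    and step_v: "\<And>k. g (x (Suc k)) \<le> g (y k) + dg (y k) \<bullet> (x (Suc k) - y k)
                        + norm (x (Suc k) - y k)^2 / (2 * \<eta> k)"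
    and step_vi: "\<And>k. z (Suc k) = x k + (1 / \<alpha> k) *\<^sub>R (x (Suc k) - x k)"
    and \<mu>_pos: "\<mu> > 0"
    and c: "0 < c" "c < 1"
    and eps0: "eps 0 > 0"
    and eps_def: "\<And>k. k \<ge> 1 \<Longrightarrow>
        eps k = eps 0 / (real k + 1) * sqrt (\<Prod>j<k. 1 - c * \<alpha> j)"
  shows "\<forall>k xs. (\<forall>v. Phi dg h r xs (y k) (\<eta> k) \<le> Phi dg h r v (y k) (\<eta> k)) \<longrightarrow>
    (let \<kappa> = Lg / (\<gamma>dec * \<mu>);
         \<psi>0 = real_of_ereal (F (x 0)) - Fstar
               + (1 - (1 - c) * \<alpha> 0) * \<gamma> 0 / 2 * norm (xstar - z 0)^2;
         S = sqrt \<kappa> / (2 * (1 - c)^2 * Lu) * (\<Sum>i. eps 0 ^ 2 / (real i + 1)^2);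
         \<delta> = (\<lambda>i. sqrt (\<Prod>j<i. 1 - c * \<alpha> j) * sqrt (2 * (\<psi>0 + S) / \<mu>));
         gap = Phi dg h r (x k) (y k) (\<eta> k) - Phi dg h r xs (y k) (\<eta> k)
     in (if k = 0 then gap \<le> dist0 (subdiff F (x 0)) ^ 2 / ereal (2 * Lu)
         else gap \<le> ereal ((eps (k - 1) + 3 * Lg * (\<delta> k + \<delta> (k - 1)) / (\<gamma>dec * sqrt c))^2 / (2 * Lu))))"
proof -
  have rp: "\<And>v. r v \<noteq> -\<infinity>" using r_proper unfolding eproper_def by auto
  define rr where "rr v = real_of_ereal (r v)" for v
  define Fr where "Fr v = g v + h v + rr v" for v
  have rfin: "r v = ereal (rr v)" if "r v \<noteq> \<infinity>" for v
    using that rp[of v] unfolding rr_def by (cases "r v") auto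
  have Hset: "\<exists>s. s \<in> subdiff H (x (Suc j)) \<and>
      norm (dg (y j) + (1 / \<eta> j) *\<^sub>R (x (Suc j) - y j) + s) < eps j + t" if "t > 0" for j t
  proof -
    from dist0_approx[OF step_iv[of j] that] show ?thesis by auto
  qed
  have finx: "r (x k) \<noteq> \<infinity>" for k
  proof (cases k)
    case 0 thus ?thesis using init(2) unfolding H_def by auto
  next
    case (Suc j)
    obtain s where "s \<in> subdiff H (x (Suc j))" using Hset[of 1 j] by auto
    hence "H (x (Suc j)) \<noteq> \<infinity>" unfolding subdiff_def by auto
    thus ?thesis using Suc unfolding H_def by auto
  qed
  have rx: "r (x k) = ereal (rr (x k))" for k using rfin[OF finx] .
  have rs: "r xstar = ereal (rr xstar)"
    using Fstar_def rfin unfolding F_def by (cases "r xstar") auto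
  have Fstar: "Fstar = Fr xstar" using Fstar_def rs unfolding F_def Fr_def by simp
  have Fx: "F (x k) = ereal (Fr (x k))" for k unfolding F_def Fr_def rx by simp
  have Fge: "Fstar \<le> Fr (x k)" for k using F_min[of "x k"] Fstar_def Fx by simp
  have Fmin': "\<And>w. ereal (g xstar + h xstar) + r xstar \<le> ereal (g w + h w) + r w"
    using F_min unfolding F_def .
  have etap: "\<eta> k > 0" for k using pos(1) .
  have etaLu: "\<eta> k \<le> 1 / Lu" for k using step_i[of k] by simp
  have etainv: "1 / \<eta> k \<le> Lg / \<gamma>dec" for k
  proof -
    have "\<gamma>dec / Lg < \<eta> k" using step_i[of k] by simp
    hence "\<gamma>dec < \<eta> k * Lg" using Lg_pos by (simp add: divide_less_eq)
    thus ?thesis using etap[of k] \<gamma>dec Lg_pos by (simp add: divide_le_eq field_simps)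
  qed
  have aeq: "\<alpha> k ^ 2 = \<eta> k * \<gamma> (Suc k)" for k
  proof -
    have "\<gamma> (Suc k) = \<alpha> k ^ 2 / \<eta> k" using step_ii[of k] by simp
    thus ?thesis using etap[of k] by (simp add: field_simps)
  qed
  have gge: "\<gamma> k \<ge> \<mu>" for k
  proof (induction k)
    case 0 thus ?case using init(3) .
  next
    case (Suc k)
    have a1: "\<alpha> k \<le> 1"
    proof (rule ccontr)
      assume "\<not> \<alpha> k \<le> 1"
      have "\<gamma> (Suc k) = \<gamma> k - \<alpha> k * (\<gamma> k - \<mu>)" using step_ii[of k] by (simp add: algebra_simps)
      also have "\<dots> \<le> \<gamma> k - 1 * (\<gamma> k - \<mu>)" using \<open>\<not> \<alpha> k \<le> 1\<close> Suc
        by (intro diff_left_mono mult_right_mono) auto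
      finally have "\<gamma> (Suc k) \<le> \<mu>" by simp
      hence "\<alpha> k ^ 2 \<le> \<eta> k * \<mu>" unfolding aeq using etap[of k] by (simp add: mult_left_mono)
      also have "\<dots> \<le> (1 / Lu) * Lu" using etaLu[of k] Lu \<mu>_nonneg etap[of k]
        by (intro mult_mono) auto
      finally have "\<alpha> k ^ 2 \<le> 1" using Lu by simp
      moreover have "1 < \<alpha> k ^ 2" using \<open>\<not> \<alpha> k \<le> 1\<close> by (simp add: one_less_power)
      ultimately show False by simp
    qed
    have "\<gamma> (Suc k) = (1 - \<alpha> k) * \<gamma> k + \<alpha> k * \<mu>" using step_ii[of k] by simp
    also have "\<dots> \<ge> (1 - \<alpha> k) * \<mu> + \<alpha> k * \<mu>" using a1 Suc pos(2)[of k] by (intro add_mono mult_left_mono) auto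
    finally show ?case by (simp add: algebra_simps)
  qed
  have ale1: "\<alpha> k \<le> 1" for k
  proof (rule ccontr)
    assume "\<not> \<alpha> k \<le> 1"
    have "\<gamma> (Suc k) = \<gamma> k - \<alpha> k * (\<gamma> k - \<mu>)" using step_ii[of k] by (simp add: algebra_simps)
    also have "\<dots> \<le> \<gamma> k - 1 * (\<gamma> k - \<mu>)" using \<open>\<not> \<alpha> k \<le> 1\<close> gge[of k]
      by (intro diff_left_mono mult_right_mono) auto
    finally have "\<gamma> (Suc k) \<le> \<mu>" by simp
    hence "\<alpha> k ^ 2 \<le> \<eta> k * \<mu>" unfolding aeq using etap[of k] by (simp add: mult_left_mono)
    also have "\<dots> \<le> (1 / Lu) * Lu" using etaLu[of k] Lu \<mu>_nonneg etap[of k]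
      by (intro mult_mono) auto
    finally have "\<alpha> k ^ 2 \<le> 1" using Lu by simp
    moreover have "1 < \<alpha> k ^ 2" using \<open>\<not> \<alpha> k \<le> 1\<close> by (simp add: one_less_power)
    ultimately show False by simp
  qed
  define \<kappa> where "\<kappa> = Lg / (\<gamma>dec * \<mu>)"
  have kpos: "\<kappa> > 0" unfolding \<kappa>_def using Lg_pos \<gamma>dec \<mu>_pos by simp
  have ainv: "1 / \<alpha> k \<le> sqrt \<kappa>" for k
  proof -
    have "\<alpha> k ^ 2 = \<eta> k * \<gamma> (Suc k)" using aeq .
    also have "\<dots> \<ge> (\<gamma>dec / Lg) * \<mu>" using etap[of k] step_i[of k] gge[of "Suc k"] \<mu>_nonneg \<gamma>dec Lg_pos
      by (intro mult_mono) auto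
    finally have "1 / \<kappa> \<le> \<alpha> k ^ 2" unfolding \<kappa>_def by simp
    hence "sqrt (1 / \<kappa>) \<le> sqrt (\<alpha> k ^ 2)" by (rule real_sqrt_le_mono)
    hence "1 / sqrt \<kappa> \<le> \<alpha> k" using pos(2)[of k] by (simp add: real_sqrt_divide)
    thus ?thesis using pos(2)[of k] kpos by (simp add: field_simps)
  qed
  define P where "P k = (\<Prod>j<k. 1 - c * \<alpha> j)" for k
  have fac: "1 - c * \<alpha> k \<ge> 1 - c" "1 - c * \<alpha> k > 0" for k
  proof -
    have "c * \<alpha> k \<le> c * 1" using ale1[of k] c by (intro mult_left_mono) auto
    thus "1 - c * \<alpha> k \<ge> 1 - c" by simp
    thus "1 - c * \<alpha> k > 0" using c by linarith
  qed
  have Ppos: "P k > 0" for k unfolding P_def using fac(2) by (intro prod_pos) auto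
  have PSuc: "P (Suc k) = (1 - c * \<alpha> k) * P k" for k unfolding P_def by simp
  have Pmono: "P (Suc k) \<le> P k" for k
  proof -
    have "(1 - c * \<alpha> k) * P k \<le> 1 * P k" using Ppos[of k] pos(2)[of k] c
      by (intro mult_right_mono) auto
    thus ?thesis unfolding PSuc by simp
  qed
  have epsk: "eps k = eps 0 / (real k + 1) * sqrt (P k)" for k
    using eps_def[of k] unfolding P_def by (cases k) auto
  have eps2: "eps k ^ 2 = eps 0 ^ 2 / (real k + 1) ^ 2 * P k" for k
    by (subst epsk[of k]) (use Ppos[of k] in \<open>simp add: power_mult_distrib power_divide\<close>)
  define B where "B k = Fr (x k) - Fstar + (1 - (1 - c) * \<alpha> k) * \<gamma> k / 2 * norm (xstar - z k)^2" for k
  have coefc: "1 - (1 - c) * \<alpha> k \<ge> c" for k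
  proof -
    have "(1 - c) * \<alpha> k \<le> (1 - c) * 1" using ale1[of k] c by (intro mult_left_mono) auto
    thus ?thesis by simp
  qed
  have Bge: "B k \<ge> Fr (x k) - Fstar" for k
    unfolding B_def using coefc[of k] c pos(3)[of k] by simp
  have dgrad: "g u \<ge> g v + dg v \<bullet> (u - v) + \<mu> / 2 * norm (u - v)^2" for u v
    by (rule grad_ineq[OF g_grad g_strong])
  have one_step: "B (Suc k) \<le> (1 - c * \<alpha> k) * B k + sqrt \<kappa> * eps k ^ 2 / (2 * (1 - c) * Lu)" for k
  proof -
    define D where "D = norm (xstar - z (Suc k))"
    define A where "A = Fr (x k) - Fstar + \<gamma> k / 2 * norm (xstar - z k)^2"
    define A' where "A' = Fr (x (Suc k)) - Fstar + \<gamma> (Suc k) / 2 * D^2"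
    have al: "0 < \<alpha> k" "\<alpha> k \<le> 1" using pos(2)[of k] ale1[of k] by auto
    have Dnn: "D \<ge> 0" unfolding D_def by simp
    have approx: "A' \<le> ((1 - \<alpha> k) * A + \<alpha> k * eps k * D) + t * (\<alpha> k * D)" if t: "0 < t" "t \<le> 1" for t
    proof -
      obtain s where s: "s \<in> subdiff H (x (Suc k))"
        and sn: "norm (dg (y k) + (1 / \<eta> k) *\<^sub>R (x (Suc k) - y k) + s) < eps k + t"
        using Hset[OF t(1), of k] by auto
      have sg: "\<And>u. H (x (Suc k)) + ereal (s \<bullet> (u - x (Suc k))) \<le> H u"
        using s unfolding subdiff_def by auto
      have Hs: "h xstar + rr xstar \<ge> h (x (Suc k)) + rr (x (Suc k)) + s \<bullet> (xstar - x (Suc k))"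
        using sg[of xstar] unfolding H_def by (simp add: rx rs)
      have Hk: "h (x k) + rr (x k) \<ge> h (x (Suc k)) + rr (x (Suc k)) + s \<bullet> (x k - x (Suc k))"
        using sg[of "x k"] unfolding H_def by (simp add: rx)
      have gk: "g (x k) \<ge> g (y k) + dg (y k) \<bullet> (x k - y k)"
        using dgrad[where u="x k" and v="y k"] \<mu>_nonneg by (smt (verit) mult_nonneg_nonneg zero_le_power2 divide_nonneg_pos)
      have G2: "\<gamma> (Suc k) = (1 - \<alpha> k) * \<gamma> k + \<alpha> k * \<mu>" using step_ii[of k] by simp
      have G1: "\<gamma> (Suc k) = \<alpha> k ^ 2 / \<eta> k" using step_ii[of k] by simp
      from core[OF Hs Hk step_v[of k] dgrad[where u=xstar and v="y k"] gk etap[of k] al pos(3)[of k] \<mu>_nonneg G1 G2 step_iii[of k] step_vi[of k]]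
      have c1: "Fr (x (Suc k)) - Fstar + \<gamma> (Suc k) / 2 * D^2
          \<le> (1 - \<alpha> k) * A
           + \<alpha> k * ((dg (y k) + (1 / \<eta> k) *\<^sub>R (x (Suc k) - y k) + s) \<bullet> (z (Suc k) - xstar))"
        unfolding Fstar Fr_def A_def D_def by (simp add: add.assoc)
      have "(dg (y k) + (1 / \<eta> k) *\<^sub>R (x (Suc k) - y k) + s) \<bullet> (z (Suc k) - xstar)
          \<le> norm (dg (y k) + (1 / \<eta> k) *\<^sub>R (x (Suc k) - y k) + s) * D"
        unfolding D_def by (metis norm_cauchy_schwarz norm_minus_commute)
      also have "\<dots> \<le> (eps k + t) * D" using sn Dnn by (intro mult_right_mono) auto
      finally have "\<alpha> k * ((dg (y k) + (1 / \<eta> k) *\<^sub>R (x (Suc k) - y k) + s) \<bullet> (z (Suc k) - xstar))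
          \<le> \<alpha> k * ((eps k + t) * D)" using al by (intro mult_left_mono) auto
      moreover have "\<alpha> k * ((eps k + t) * D) = \<alpha> k * eps k * D + t * (\<alpha> k * D)"
        by (simp add: algebra_simps)
      ultimately show ?thesis using c1 unfolding A'_def by linarith
    qed
    have A'le: "A' \<le> (1 - \<alpha> k) * A + \<alpha> k * eps k * D"
      by (rule eps_trick[OF approx]) (use al Dnn in auto)
    define \<theta> where "\<theta> = (1 - c) * \<alpha> (Suc k)"
    have th: "\<theta> > 0" unfolding \<theta>_def using c pos(2) by simp
    have Gp: "\<gamma> (Suc k) > 0" using pos(3) .
    have young: "\<alpha> k * eps k * D \<le> \<theta> * \<gamma> (Suc k) / 2 * D^2 + \<eta> k * eps k ^ 2 / (2 * \<theta>)"
    proof -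
      have q: "\<theta> * \<gamma> (Suc k) > 0" using th Gp by simp
      have "0 \<le> (\<theta> * \<gamma> (Suc k) * D - \<alpha> k * eps k)^2 / (2 * (\<theta> * \<gamma> (Suc k)))" using q by simp
      also have "\<dots> = \<theta> * \<gamma> (Suc k) / 2 * D^2 + (\<alpha> k ^ 2) * eps k ^ 2 / (2 * \<theta> * \<gamma> (Suc k)) - \<alpha> k * eps k * D"
        using q th Gp by (simp add: field_simps power2_eq_square)
      also have "(\<alpha> k ^ 2) * eps k ^ 2 / (2 * \<theta> * \<gamma> (Suc k)) = \<eta> k * eps k ^ 2 / (2 * \<theta>)"
        unfolding aeq using Gp th by (simp add: field_simps)
      finally show ?thesis by simp
    qed
    have BS: "B (Suc k) = A' - \<theta> * \<gamma> (Suc k) / 2 * D^2"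
    proof -
      have "(1 - \<theta>) * \<gamma> (Suc k) / 2 * D^2 = \<gamma> (Suc k) / 2 * D^2 - \<theta> * \<gamma> (Suc k) / 2 * D^2"
        by (simp add: left_diff_distrib diff_divide_distrib)
      thus ?thesis unfolding B_def A'_def D_def[symmetric] \<theta>_def[symmetric] by simp
    qed
    have c2: "(1 - \<alpha> k) * A \<le> (1 - c * \<alpha> k) * B k"
    proof -
      define Q where "Q = \<gamma> k / 2 * norm (xstar - z k)^2"
      define Fd where "Fd = Fr (x k) - Fstar"
      have Qnn: "Q \<ge> 0" unfolding Q_def using pos(3)[of k] by simp
      have eA: "A = Fd + Q" unfolding A_def Q_def Fd_def by simp
      have eB: "B k = Fd + (1 - (1 - c) * \<alpha> k) * Q" unfolding B_def Q_def Fd_def by (simp add: field_simps)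
      have f1: "(1 - \<alpha> k) * Fd \<le> (1 - c * \<alpha> k) * Fd"
        unfolding Fd_def using Fge[of k] c al by (intro mult_right_mono) (auto simp: mult_le_cancel_right1)
      have "1 - \<alpha> k \<le> (1 - c * \<alpha> k) * (1 - (1 - c) * \<alpha> k)"
      proof -
        have "(1 - c * \<alpha> k) * (1 - (1 - c) * \<alpha> k) = 1 - \<alpha> k + c * (1 - c) * \<alpha> k^2"
          by (simp add: algebra_simps power2_eq_square)
        moreover have "c * (1 - c) * \<alpha> k^2 \<ge> 0" using c by simp
        ultimately show ?thesis by linarith
      qed
      hence f2: "(1 - \<alpha> k) * Q \<le> ((1 - c * \<alpha> k) * (1 - (1 - c) * \<alpha> k)) * Q"
        using Qnn by (intro mult_right_mono) auto
      have e1: "(1 - \<alpha> k) * A = (1 - \<alpha> k) * Fd + (1 - \<alpha> k) * Q" unfolding eA by (simp add: distrib_left)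
      have e2: "(1 - c * \<alpha> k) * B k = (1 - c * \<alpha> k) * Fd + ((1 - c * \<alpha> k) * (1 - (1 - c) * \<alpha> k)) * Q"
        unfolding eB by (simp add: distrib_left mult.assoc)
      show ?thesis using f1 f2 e1 e2 by linarith
    qed
    have c3: "\<eta> k * eps k ^ 2 / (2 * \<theta>) \<le> sqrt \<kappa> * eps k ^ 2 / (2 * (1 - c) * Lu)"
    proof -
      have "\<eta> k * eps k ^ 2 / (2 * \<theta>) = eps k ^ 2 / (2 * (1 - c)) * (\<eta> k * (1 / \<alpha> (Suc k)))"
        unfolding \<theta>_def using c pos(2)[of "Suc k"] by (simp add: field_simps)
      also have "\<dots> \<le> eps k ^ 2 / (2 * (1 - c)) * ((1 / Lu) * sqrt \<kappa>)"
        using c Lu etaLu[of k] ainv[of "Suc k"] etap[of k] pos(2)[of "Suc k"]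
        by (intro mult_left_mono mult_mono) auto
      also have "\<dots> = sqrt \<kappa> * eps k ^ 2 / (2 * (1 - c) * Lu)" by simp
      finally show ?thesis .
    qed
    show ?thesis using A'le young BS c2 c3 by linarith
  qed
  define T where "T k = sqrt \<kappa> / (2 * (1 - c)^2 * Lu) * (\<Sum>i<k. eps 0 ^ 2 / (real i + 1)^2)" for k
  define \<psi>0 where "\<psi>0 = real_of_ereal (F (x 0)) - Fstar
               + (1 - (1 - c) * \<alpha> 0) * \<gamma> 0 / 2 * norm (xstar - z 0)^2"
  have psiB: "\<psi>0 = B 0" unfolding \<psi>0_def B_def Fx by simp
  have Bbound: "B k \<le> P k * (\<psi>0 + T k)" for k
  proof (induction k)
    case 0 show ?case using psiB by (simp add: P_def T_def)
  next
    case (Suc k)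
    define q where "q = sqrt \<kappa> * eps 0 ^ 2 / (2 * Lu * (real k + 1)^2)"
    have qnn: "q \<ge> 0" unfolding q_def using Lu kpos by (intro divide_nonneg_pos mult_nonneg_nonneg) auto
    have c1: "1 - c \<noteq> 0" using c by simp
    have TS: "T (Suc k) = T k + q / (1 - c)^2"
      unfolding T_def q_def using c1 Lu by (simp add: field_simps)
    have err: "sqrt \<kappa> * eps k ^ 2 / (2 * (1 - c) * Lu) = P k * q / (1 - c)"
      by (subst eps2[of k]) (use c1 Lu in \<open>simp add: q_def field_simps\<close>)
    have "P k * q / (1 - c) = (1 - c) * (P k * q) / (1 - c)^2" using c1 by (simp add: power2_eq_square)
    also have "\<dots> \<le> (1 - c * \<alpha> k) * (P k * q) / (1 - c)^2"
      using fac[of k] Ppos[of k] qnn by (intro divide_right_mono mult_right_mono) auto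
    finally have e1: "P k * q / (1 - c) \<le> (1 - c * \<alpha> k) * (P k * q) / (1 - c)^2" .
    have ih: "(1 - c * \<alpha> k) * B k \<le> (1 - c * \<alpha> k) * (P k * (\<psi>0 + T k))"
      using Suc.IH fac(2)[of k] by (intro mult_left_mono) auto
    have "P (Suc k) * (\<psi>0 + T (Suc k))
        = (1 - c * \<alpha> k) * (P k * (\<psi>0 + T k)) + (1 - c * \<alpha> k) * (P k * q) / (1 - c)^2"
      unfolding PSuc TS using c1 by (simp add: field_simps)
    thus ?case using one_step[of k] err e1 ih by linarith
  qed
  have summ0: "summable (\<lambda>n::nat. 1 / (real n + 1)^2)"
    using sums_summable[OF inverse_squares_sums] by (simp add: add.commute)
  have summ: "summable (\<lambda>i::nat. eps 0 ^ 2 / (real i + 1)^2)"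
    using summable_mult[OF summ0, of "eps 0 ^ 2"] by simp
  define S where "S = sqrt \<kappa> / (2 * (1 - c)^2 * Lu) * (\<Sum>i. eps 0 ^ 2 / (real i + 1)^2)"
  have TleS: "T k \<le> S" for k
  proof -
    have "(\<Sum>i<k. eps 0 ^ 2 / (real i + 1)^2) \<le> (\<Sum>i. eps 0 ^ 2 / (real i + 1)^2)"
      by (rule sum_le_suminf[OF summ]) auto
    thus ?thesis unfolding T_def S_def using Lu c kpos by (intro mult_left_mono) auto
  qed
  define Q where "Q = \<psi>0 + S"
  have Bk: "B k \<le> P k * Q" for k
  proof -
    have "P k * (\<psi>0 + T k) \<le> P k * Q" unfolding Q_def using TleS[of k] Ppos[of k] by simp
    thus ?thesis using Bbound[of k] by linarith
  qed
  have Qnn: "Q \<ge> 0"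
  proof -
    have "0 \<le> B 0" using Bge[of 0] Fge[of 0] by linarith
    moreover have "T 0 = 0" unfolding T_def by simp
    ultimately show ?thesis unfolding Q_def using psiB TleS[of 0] by linarith
  qed
  define \<delta> where "\<delta> i = sqrt (P i) * sqrt (2 * Q / \<mu>)" for i
  have near: "norm (p - xstar) \<le> \<delta> k / sqrt c" if h: "c * \<mu> / 2 * norm (xstar - p)^2 \<le> B k" for p k
  proof -
    have "c * \<mu> / 2 * norm (p - xstar)^2 \<le> P k * Q" using h Bk[of k] by (simp add: norm_minus_commute)
    hence "norm (p - xstar)^2 \<le> P k * (2 * Q / \<mu>) / c" using c \<mu>_pos by (simp add: field_simps)
    hence "sqrt (norm (p - xstar)^2) \<le> sqrt (P k * (2 * Q / \<mu>) / c)" by (rule real_sqrt_le_mono)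
    thus ?thesis unfolding \<delta>_def by (simp add: real_sqrt_mult real_sqrt_divide)
  qed
  have nx: "norm (x k - xstar) \<le> \<delta> k / sqrt c" for k
  proof (rule near)
    have "\<mu> / 2 * (1 - (1 - c)) * norm (xstar - x k)^2 \<le> (g (x k) + h (x k) + rr (x k)) - (g xstar + h xstar + rr xstar)"
      by (rule strong_min[OF g_strong h_convex r_convex rp rs rx Fmin']) (use c in auto)
    thus "c * \<mu> / 2 * norm (xstar - x k)^2 \<le> B k"
      using Bge[of k] unfolding Fstar Fr_def by (simp add: mult.commute mult.left_commute)
  qed
  have nz: "norm (z k - xstar) \<le> \<delta> k / sqrt c" for k
  proof (rule near)
    have "c * \<mu> \<le> (1 - (1 - c) * \<alpha> k) * \<gamma> k"
      using coefc[of k] gge[of k] c \<mu>_nonneg by (intro mult_mono) auto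
    hence "c * \<mu> / 2 * norm (xstar - z k)^2 \<le> (1 - (1 - c) * \<alpha> k) * \<gamma> k / 2 * norm (xstar - z k)^2"
      by (intro mult_right_mono divide_right_mono) auto
    thus "c * \<mu> / 2 * norm (xstar - z k)^2 \<le> B k" unfolding B_def using Fge[of k] by linarith
  qed
  have ny: "norm (y k - xstar) \<le> \<delta> k / sqrt c" for k
  proof -
    define A where "A = \<alpha> k * \<gamma> k"
    define G where "G = \<gamma> (Suc k)"
    have AG: "A > 0" "G > 0" unfolding A_def G_def using pos(2,3) by auto
    define l where "l = A / (A + G)"
    have l01: "0 \<le> l" "l \<le> 1" unfolding l_def using AG by auto
    have "y k = l *\<^sub>R z k + (1 - l) *\<^sub>R x k"
    proof -
      have "1 - l = G / (A + G)" unfolding l_def using AG by (simp add: field_simps)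
      thus ?thesis unfolding step_iii[of k] l_def A_def[symmetric] G_def[symmetric]
        by (simp add: scaleR_add_right)
    qed
    hence "y k - xstar = l *\<^sub>R (z k - xstar) + (1 - l) *\<^sub>R (x k - xstar)"
      by (simp add: algebra_simps)
    hence "norm (y k - xstar) \<le> l * norm (z k - xstar) + (1 - l) * norm (x k - xstar)"
      using norm_triangle_ineq[of "l *\<^sub>R (z k - xstar)" "(1 - l) *\<^sub>R (x k - xstar)"] l01 by simp
    also have "\<dots> \<le> l * (\<delta> k / sqrt c) + (1 - l) * (\<delta> k / sqrt c)"
      using nz[of k] nx[of k] l01 by (intro add_mono mult_left_mono) auto
    also have "(1 - l) * (\<delta> k / sqrt c) = \<delta> k / sqrt c - l * (\<delta> k / sqrt c)"
      by (simp add: left_diff_distrib diff_divide_distrib)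
    finally show ?thesis by linarith
  qed
  have \<delta>mono: "\<delta> (Suc k) \<le> \<delta> k" for k
    unfolding \<delta>_def using Pmono[of k] Qnn \<mu>_pos by (intro mult_right_mono real_sqrt_le_mono) auto
  have y0: "y 0 = x 0"
  proof -
    have AG: "\<alpha> 0 * \<gamma> 0 + \<gamma> (Suc 0) > 0" using pos(2,3) by (simp add: add_pos_pos)
    have "y 0 = (1 / (\<alpha> 0 * \<gamma> 0 + \<gamma> (Suc 0))) *\<^sub>R ((\<alpha> 0 * \<gamma> 0 + \<gamma> (Suc 0)) *\<^sub>R x 0)"
      unfolding step_iii[of 0] init(1)[symmetric] by (simp add: scaleR_add_left)
    thus ?thesis using AG by simp
  qed
  have HH: "subdiff H v = subdiff (\<lambda>v. ereal (h v) + r v) v" for v unfolding H_def ..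
  have main: "if k = 0 then Phi dg h r (x k) (y k) (\<eta> k) - Phi dg h r xs (y k) (\<eta> k) \<le> dist0 (subdiff F (x 0)) ^ 2 / ereal (2 * Lu)
         else Phi dg h r (x k) (y k) (\<eta> k) - Phi dg h r xs (y k) (\<eta> k)
           \<le> ereal ((eps (k - 1) + 3 * Lg * (\<delta> k + \<delta> (k - 1)) / (\<gamma>dec * sqrt c))^2 / (2 * Lu))" for k xs
  proof (cases k)
    case 0
    have "Phi dg h r (x 0) (y 0) (\<eta> 0) - Phi dg h r xs (y 0) (\<eta> 0) \<le> dist0 (subdiff F (x 0)) ^ 2 / ereal (2 * Lu)"
    proof (rule dist0_bound[OF _ Lu(1)])
      fix s assume s: "s \<in> subdiff F (x 0)"
      have s': "s - dg (x 0) \<in> subdiff (\<lambda>v. ereal (h v) + r v) (x 0)"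
        by (rule sumrule[OF g_grad h_convex r_convex rp]) (use s in \<open>simp add: F_def\<close>)
      have "Phi dg h r (x 0) (y 0) (\<eta> 0) - Phi dg h r xs (y 0) (\<eta> 0)
          \<le> ereal (\<eta> 0 / 2 * norm (dg (y 0) + (1 / \<eta> 0) *\<^sub>R (x 0 - y 0) + (s - dg (x 0)))^2)"
        by (rule gap_bound[OF s' etap rp])
      also have "\<dots> = ereal (\<eta> 0 / 2 * norm s ^ 2)" using y0 by simp
      also have "\<dots> \<le> ereal (norm s ^ 2 / (2 * Lu))"
      proof -
        have "\<eta> 0 / 2 * norm s ^ 2 \<le> (1 / Lu) / 2 * norm s ^ 2"
          using etaLu[of 0] by (intro mult_right_mono divide_right_mono) auto
        thus ?thesis by simp
      qed
      finally show "Phi dg h r (x 0) (y 0) (\<eta> 0) - Phi dg h r xs (y 0) (\<eta> 0) \<le> ereal (norm s ^ 2 / (2 * Lu))" .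
    qed
    thus ?thesis using 0 by simp
  next
    case (Suc j)
    define M where "M = 3 * Lg * (\<delta> k + \<delta> j) / (\<gamma>dec * sqrt c)"
    define R where "R i = \<delta> i / sqrt c" for i
    define gap where "gap = Phi dg h r (x k) (y k) (\<eta> k) - Phi dg h r xs (y k) (\<eta> k)"
    have Rmono: "R k \<le> R j" unfolding R_def Suc using \<delta>mono[of j] c by (simp add: divide_right_mono)
    have Rnn: "R j \<ge> 0" unfolding R_def \<delta>_def using Ppos[of j] Qnn \<mu>_pos c by simp
    have Rk: "R k \<ge> 0" unfolding R_def \<delta>_def using Ppos[of k] Qnn \<mu>_pos c by simp
    have LL: "Lg \<le> Lg / \<gamma>dec" using Lg_pos \<gamma>dec by (simp add: le_divide_eq)
    have Lgd: "0 \<le> Lg / \<gamma>dec" using Lg_pos \<gamma>dec by simp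
    have Meq: "M = (Lg / \<gamma>dec) * (3 * R k + 3 * R j)"
      unfolding M_def R_def using \<gamma>dec c by (simp add: field_simps)
    have approx: "gap \<le> ereal ((eps j + t + M)^2 / (2 * Lu))" if t: "0 < t" "t \<le> 1" for t
    proof -
      obtain s where s: "s \<in> subdiff H (x (Suc j))"
        and sn: "norm (dg (y j) + (1 / \<eta> j) *\<^sub>R (x (Suc j) - y j) + s) < eps j + t"
        using Hset[OF t(1), of j] by auto
      define w where "w = dg (y j) + (1 / \<eta> j) *\<^sub>R (x k - y j) + s"
      define p where "p = dg (y k) + (1 / \<eta> k) *\<^sub>R (x k - y k) + s"
      have wn: "norm w < eps j + t" using sn unfolding w_def Suc .
      have peq: "p = w + (dg (y k) - dg (y j)) + (1 / \<eta> k) *\<^sub>R (x k - y k) - (1 / \<eta> j) *\<^sub>R (x k - y j)"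
        unfolding p_def w_def by (simp add: algebra_simps)
      have "norm p \<le> norm w + norm (dg (y k) - dg (y j)) + norm ((1 / \<eta> k) *\<^sub>R (x k - y k)) + norm ((1 / \<eta> j) *\<^sub>R (x k - y j))"
        unfolding peq by (smt (verit) norm_triangle_ineq norm_triangle_ineq4)
      also have "norm ((1 / \<eta> k) *\<^sub>R (x k - y k)) = (1 / \<eta> k) * norm (x k - y k)"
        using etap[of k] by simp
      also have "norm ((1 / \<eta> j) *\<^sub>R (x k - y j)) = (1 / \<eta> j) * norm (x k - y j)"
        using etap[of j] by simp
      finally have pn: "norm p \<le> norm w + norm (dg (y k) - dg (y j)) + (1 / \<eta> k) * norm (x k - y k) + (1 / \<eta> j) * norm (x k - y j)" .
      have b1: "norm (dg (y k) - dg (y j)) \<le> (Lg / \<gamma>dec) * (R k + R j)"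
      proof -
        have "norm (y k - y j) \<le> norm (y k - xstar) + norm (y j - xstar)"
          using norm_triangle_ineq4[of "y k - xstar" "y j - xstar"] by simp
        also have "\<dots> \<le> R k + R j" unfolding R_def using ny[of k] ny[of j] by simp
        finally have "norm (y k - y j) \<le> R k + R j" .
        hence "norm (dg (y k) - dg (y j)) \<le> Lg * (R k + R j)"
          using g_lip[of "y k" "y j"] Lg_pos by (smt (verit) mult_left_mono)
        also have "\<dots> \<le> (Lg / \<gamma>dec) * (R k + R j)"
          using LL Rnn Rk by (intro mult_right_mono) auto
        finally show ?thesis .
      qed
      have b2: "(1 / \<eta> k) * norm (x k - y k) \<le> (Lg / \<gamma>dec) * (2 * R k)"
      proof -
        have "norm (x k - y k) \<le> norm (x k - xstar) + norm (y k - xstar)"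
          using norm_triangle_ineq4[of "x k - xstar" "y k - xstar"] by simp
        also have "\<dots> \<le> 2 * R k" unfolding R_def using nx[of k] ny[of k] by simp
        finally show ?thesis using etainv[of k] etap[of k] Rk Lgd by (intro mult_mono) auto
      qed
      have b3: "(1 / \<eta> j) * norm (x k - y j) \<le> (Lg / \<gamma>dec) * (R k + R j)"
      proof -
        have "norm (x k - y j) \<le> norm (x k - xstar) + norm (y j - xstar)"
          using norm_triangle_ineq4[of "x k - xstar" "y j - xstar"] by simp
        also have "\<dots> \<le> R k + R j" unfolding R_def using nx[of k] ny[of j] by simp
        finally show ?thesis using etainv[of j] etap[of j] Rk Rnn Lgd by (intro mult_mono) auto
      qed
      have "(Lg / \<gamma>dec) * (R k + R j) + (Lg / \<gamma>dec) * (2 * R k) + (Lg / \<gamma>dec) * (R k + R j)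
          = (Lg / \<gamma>dec) * (4 * R k + 2 * R j)" by (simp add: algebra_simps)
      also have "\<dots> \<le> (Lg / \<gamma>dec) * (3 * R k + 3 * R j)"
        using Rmono Lg_pos \<gamma>dec by (intro mult_left_mono) auto
      finally have "norm p \<le> eps j + t + M" using pn b1 b2 b3 wn Meq by linarith
      hence pn2: "norm p ^ 2 \<le> (eps j + t + M)^2" by (intro power_mono) auto
      have "gap \<le> ereal (\<eta> k / 2 * norm p ^ 2)"
        unfolding gap_def p_def by (rule gap_bound[OF _ etap rp]) (use s Suc HH in simp)
      also have "\<eta> k / 2 * norm p ^ 2 \<le> (1 / Lu) / 2 * (eps j + t + M)^2"
        using Lu etaLu[of k] etap[of k] pn2 by (intro mult_mono divide_right_mono) auto
      hence "ereal (\<eta> k / 2 * norm p ^ 2) \<le> ereal ((eps j + t + M)^2 / (2 * Lu))" by simp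
      finally show ?thesis .
    qed
    have Mnn: "M \<ge> 0" unfolding Meq using Rk Rnn Lg_pos \<gamma>dec
      by (intro mult_nonneg_nonneg add_nonneg_nonneg) (auto simp: R_def \<delta>_def intro!: mult_nonneg_nonneg)
    have final: "gap \<le> ereal ((eps j + M)^2 / (2 * Lu))"
    proof (cases gap)
      case (real G)
      have "G \<le> (eps j + M)^2 / (2 * Lu) + t * ((2 * (eps j + M) + 1) / (2 * Lu))" if t: "0 < t" "t \<le> 1" for t
      proof -
        have "G \<le> (eps j + t + M)^2 / (2 * Lu)" using approx[OF t] real by simp
        also have "(eps j + t + M)^2 \<le> (eps j + M)^2 + t * (2 * (eps j + M) + 1)"
        proof -
          have "(eps j + t + M)^2 = (eps j + M)^2 + t * (2 * (eps j + M) + t)" by (simp add: power2_eq_square algebra_simps)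
          moreover have "t * (2 * (eps j + M) + t) \<le> t * (2 * (eps j + M) + 1)" using t by (intro mult_left_mono) auto
          ultimately show ?thesis by linarith
        qed
        hence "(eps j + t + M)^2 / (2 * Lu) \<le> ((eps j + M)^2 + t * (2 * (eps j + M) + 1)) / (2 * Lu)"
          using Lu by (intro divide_right_mono) auto
        also have "\<dots> = (eps j + M)^2 / (2 * Lu) + t * ((2 * (eps j + M) + 1) / (2 * Lu))"
          using Lu by (simp add: field_simps)
        finally show ?thesis .
      qed
      hence "G \<le> (eps j + M)^2 / (2 * Lu)"
        by (rule eps_trick) (use pos(4)[of j] Mnn Lu in auto)
      thus ?thesis using real by simp
    next
      case PInf
      thus ?thesis using approx[of 1] by simp
    next
      case MInf thus ?thesis by simp
    qed
    thus ?thesis unfolding gap_def M_def using Suc by simp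
  qed
  show ?thesis
  proof (intro allI impI)
    fix k xs
    assume "\<forall>v. Phi dg h r xs (y k) (\<eta> k) \<le> Phi dg h r v (y k) (\<eta> k)"
    show "let \<kappa> = Lg / (\<gamma>dec * \<mu>);
         \<psi>0 = real_of_ereal (F (x 0)) - Fstar
               + (1 - (1 - c) * \<alpha> 0) * \<gamma> 0 / 2 * norm (xstar - z 0)^2;
         S = sqrt \<kappa> / (2 * (1 - c)^2 * Lu) * (\<Sum>i. eps 0 ^ 2 / (real i + 1)^2);
         \<delta> = (\<lambda>i. sqrt (\<Prod>j<i. 1 - c * \<alpha> j) * sqrt (2 * (\<psi>0 + S) / \<mu>));
         gap = Phi dg h r (x k) (y k) (\<eta> k) - Phi dg h r xs (y k) (\<eta> k)
     in (if k = 0 then gap \<le> dist0 (subdiff F (x 0)) ^ 2 / ereal (2 * Lu)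
         else gap \<le> ereal ((eps (k - 1) + 3 * Lg * (\<delta> k + \<delta> (k - 1)) / (\<gamma>dec * sqrt c))^2 / (2 * Lu)))"
      using main[of k xs] unfolding Let_def \<delta>_def Q_def S_def \<psi>0_def \<kappa>_def P_def .
  qed
qed

end
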